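(* In the standing setting, assume (MP). Let $\beta$ be the Bellman strategy. Then for every player strategy $s$: $\mathbb E_\beta[U]=\varphi^v(0,\sigma^v(0))\ge\mathbb E_s[U]$, and for every $t\in\{1,\dots,\overline R\}$ and every admissible history $h_t=(u_0,\delta_0,\dots,u_{t-1},\delta_{t-1})$, $$\mathbb E_\beta[U\mid h_t]=\varphi^v(t,u_{t-1},\delta_{t-1})\ge \mathbb E_s[U\mid h_t].$$
   Context: Standing setting. Integers $n\ge2$, $m\ge1$; $N:=(n-1)m$. Reals $p_{\mathrm{init}}\ge0$, $\Delta P>0$; the price at round $t\ge0$ is $p_t:=p_{\mathrm{init}}+t\Delta P$. The player's valuation $v:\{0,\dots,m\}\to[0,\infty)$ satisfies $v(0)=0$ and is non-decreasing and concave. $\overline R:=\lceil (v(1)-p_{\mathrm{init}})/\Delta P\rceil$, assumed $\ge1$. For $t\ge0$, $\sigma^v(t):=\min\operatorname{argmax}_{0\le u\le m}(v(u)-up_t)$. The opponent is given by random variables $Z_1\ge Z_2\ge\dots\ge Z_N\ge0$ (a.s.) on a probability space $(\Omega,\mathcal F,\mathbb P)$; its demand at price $p$ is $\delta(p):=\sum_{j=1}^N\mathbf 1\{Z_j>p\}$. For $t\ge1$ fix transition kernels $K_t(\delta'\mid\delta)$ ($\delta,\delta'\in\{0,\dots,N\}$), each $K_t(\cdot\mid\delta)$ a probability on $\{0,\dots,\delta\}$, with $K_t(\delta'\mid\delta)=\mathbb P(\delta(p_t)=\delta'\mid\delta(p_{t-1})=\delta)$ whenever $\mathbb P(\delta(p_{t-1})=\delta)>0$.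 Value function: for $t\in\{1,\dots,\overline R\}$, $k\in\{0,\dots,m\}$, $\delta\in\{0,\dots,N\}$: $\varphi^v(t,k,\delta):=v(k)-kp_{t-1}$ if $k+\delta\le m$; $:=\max_{0\le u\le k}\sum_{\delta'=0}^N K_t(\delta'\mid\delta)\varphi^v(t+1,u,\delta')$ if $k+\delta>m$ and $t<\overline R$; $:=0$ if $k+\delta>m$ and $t=\overline R$. Also $\varphi^v(0,k):=\max_{0\le u\le k}\sum_{\delta'}\mathbb P(\delta(p_0)=\delta')\varphi^v(1,u,\delta')$. Auction. A player strategy $s=(s_t)_{0\le t\le\overline R-1}$ assigns to each history $h_t=(u_0,\delta_0,\dots,u_{t-1},\delta_{t-1})$ a bid $u_t=s_t(h_t)\in\{0,\dots,u_{t-1}\}$, where $u_{-1}:=\sigma^v(0)$. Against the straightforward opponent, the opponent's round-$t$ demand is $\delta_t:=\delta(p_t)$. The auction ends at the first round $\tau\in\{0,\dots,\overline R-1\}$ with $u_\tau+\delta_\tau\le m$ and the player's utility is $U:=v(u_\tau)-u_\tau p_\tau$; if there is no such round, $U:=0$. A history $h_t$ ($t\ge1$) is admissible if $u_0\le\sigma^v(0)$, $u_r\le u_{r-1}$, $u_r+\delta_r>m$ for all $r\le t-2$, and $\mathbb P(\delta(p_r)=\delta_r\ \forall r\le t-1)>0$. $\mathbb E_s[U\mid h_t]$ denotes the conditional expectation of $U$ given $\{\delta(p_r)=\delta_r,\ r\le t-1\}$ when the player's bids at rounds $0,\dots,t-1$ are $u_0,\dots,u_{t-1}$ and at rounds $r\ge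 t$ are $s_r(h_r)$. Bellman strategy: $\beta^v(0,k):=\min\operatorname{argmax}_{0\le u\le k}\sum_{\delta'}\mathbb P(\delta(p_0)=\delta')\varphi^v(1,u,\delta')$, and for $t\in\{1,\dots,\overline R-1\}$, $\beta^v(t,k,\delta):=\min\operatorname{argmax}_{0\le u\le k}\sum_{\delta'}K_t(\delta'\mid\delta)\varphi^v(t+1,u,\delta')$. The Bellman strategy $\beta$ bids $u_0=\beta^v(0,\sigma^v(0))$ and $u_t=\beta^v(t,u_{t-1},\delta_{t-1})$ for $t\ge1$. Markov property (MP): $(\delta(p_t))_{0\le t\le\overline R}$ is a Markov chain. *)

theory Defs
  imports "HOL-Probability.Probability"
begin

definition price :: "real \<Rightarrow> real \<Rightarrow> nat \<Rightarrow> real" where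
  "price pinit dP t = pinit + real t * dP"

definition Rbar :: "(nat \<Rightarrow> real) \<Rightarrow> real \<Rightarrow> real \<Rightarrow> nat" where
  "Rbar v pinit dP = nat \<lceil>(v 1 - pinit) / dP\<rceil>"

definition minargmax :: "nat \<Rightarrow> (nat \<Rightarrow> real) \<Rightarrow> nat" where
  "minargmax k f = (LEAST u. u \<le> k \<and> (\<forall>u'\<le>k. f u' \<le> f u))"

definition sigma :: "(nat \<Rightarrow> real) \<Rightarrow> nat \<Rightarrow> real \<Rightarrow> real \<Rightarrow> nat \<Rightarrow> nat" where
  "sigma v m pinit dP t = minargmax m (\<lambda>u. v u - real u * price pinit dP t)"

definition demand :: "nat \<Rightarrow> (nat \<Rightarrow> 'a \<Rightarrow> real) \<Rightarrow> real \<Rightarrow> 'a \<Rightarrow> nat" where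
  "demand N Z p \<omega> = (\<Sum>j\<in>{1..N}. of_bool (p < Z j \<omega>))"

definition valuation_ok :: "(nat \<Rightarrow> real) \<Rightarrow> nat \<Rightarrow> bool" where
  "valuation_ok v m \<longleftrightarrow> v 0 = 0 \<and> (\<forall>u\<le>m. 0 \<le> v u)
     \<and> (\<forall>u<m. v u \<le> v (Suc u))
     \<and> (\<forall>u. 1 \<le> u \<longrightarrow> u < m \<longrightarrow> v (Suc u) - v u \<le> v u - v (u - 1))"

text \<open>Value function. K t d d' stands for K_t(d' | d).
  phiF with fuel f evaluates the value at round t, where t = Rbar - f.\<close>
fun phiF :: "(nat \<Rightarrow> real) \<Rightarrow> nat \<Rightarrow> nat \<Rightarrow> real \<Rightarrow> real \<Rightarrow> (nat \<Rightarrow> nat \<Rightarrow> nat \<Rightarrow> real)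
              \<Rightarrow> nat \<Rightarrow> nat \<Rightarrow> nat \<Rightarrow> nat \<Rightarrow> real" where
  "phiF v m N pinit dP K 0 t k d =
     (if k + d \<le> m then v k - real k * price pinit dP (t - 1) else 0)"
| "phiF v m N pinit dP K (Suc f) t k d =
     (if k + d \<le> m then v k - real k * price pinit dP (t - 1)
      else Max ((\<lambda>u. \<Sum>d'\<le>N. K t d d' * phiF v m N pinit dP K f (Suc t) u d') ` {..k}))"

definition phi :: "(nat \<Rightarrow> real) \<Rightarrow> nat \<Rightarrow> nat \<Rightarrow> real \<Rightarrow> real \<Rightarrow> (nat \<Rightarrow> nat \<Rightarrow> nat \<Rightarrow> real)
                    \<Rightarrow> nat \<Rightarrow> nat \<Rightarrow> nat \<Rightarrow> real" where
  "phi v m N pinit dP K t k d = phiF v m N pinit dP K (Rbar v pinit dP - t) t k d"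

definition p0 :: "'a measure \<Rightarrow> nat \<Rightarrow> (nat \<Rightarrow> 'a \<Rightarrow> real) \<Rightarrow> real \<Rightarrow> real \<Rightarrow> nat \<Rightarrow> real" where
  "p0 M N Z pinit dP d = measure M {\<omega> \<in> space M. demand N Z (price pinit dP 0) \<omega> = d}"

definition phi0 :: "'a measure \<Rightarrow> (nat \<Rightarrow> 'a \<Rightarrow> real) \<Rightarrow> (nat \<Rightarrow> real) \<Rightarrow> nat \<Rightarrow> nat \<Rightarrow> real \<Rightarrow> real
                    \<Rightarrow> (nat \<Rightarrow> nat \<Rightarrow> nat \<Rightarrow> real) \<Rightarrow> nat \<Rightarrow> real" where
  "phi0 M Z v m N pinit dP K k =
     Max ((\<lambda>u. \<Sum>d'\<le>N. p0 M N Z pinit dP d' * phi v m N pinit dP K 1 u d') ` {..k})"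

definition beta0 :: "'a measure \<Rightarrow> (nat \<Rightarrow> 'a \<Rightarrow> real) \<Rightarrow> (nat \<Rightarrow> real) \<Rightarrow> nat \<Rightarrow> nat \<Rightarrow> real \<Rightarrow> real
                    \<Rightarrow> (nat \<Rightarrow> nat \<Rightarrow> nat \<Rightarrow> real) \<Rightarrow> nat \<Rightarrow> nat" where
  "beta0 M Z v m N pinit dP K k =
     minargmax k (\<lambda>u. \<Sum>d'\<le>N. p0 M N Z pinit dP d' * phi v m N pinit dP K 1 u d')"

definition betaT :: "(nat \<Rightarrow> real) \<Rightarrow> nat \<Rightarrow> nat \<Rightarrow> real \<Rightarrow> real
                    \<Rightarrow> (nat \<Rightarrow> nat \<Rightarrow> nat \<Rightarrow> real) \<Rightarrow> nat \<Rightarrow> nat \<Rightarrow> nat \<Rightarrow> nat" where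
  "betaT v m N pinit dP K t k d =
     minargmax k (\<lambda>u. \<Sum>d'\<le>N. K t d d' * phi v m N pinit dP K (Suc t) u d')"

text \<open>Strategies: s t h is the bid at round t after history h = [(u_0,d_0),...,(u_(t-1),d_(t-1))].\<close>
type_synonym strategy = "nat \<Rightarrow> (nat \<times> nat) list \<Rightarrow> nat"

definition valid_strategy :: "(nat \<Rightarrow> real) \<Rightarrow> nat \<Rightarrow> real \<Rightarrow> real \<Rightarrow> strategy \<Rightarrow> bool" where
  "valid_strategy v m pinit dP s \<longleftrightarrow>
     (\<forall>t < Rbar v pinit dP. \<forall>h. length h = t \<longrightarrow>
        s t h \<le> (if t = 0 then sigma v m pinit dP 0 else fst (last h)))"

definition bellman :: "'a measure \<Rightarrow> (nat \<Rightarrow> 'a \<Rightarrow> real) \<Rightarrow> (nat \<Rightarrow> real) \<Rightarrow> nat \<Rightarrow> nat \<Rightarrow> real \<Rightarrow> real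
                    \<Rightarrow> (nat \<Rightarrow> nat \<Rightarrow> nat \<Rightarrow> real) \<Rightarrow> strategy" where
  "bellman M Z v m N pinit dP K t h =
     (if h = [] then beta0 M Z v m N pinit dP K (sigma v m pinit dP 0)
      else betaT v m N pinit dP K t (fst (last h)) (snd (last h)))"

text \<open>Play against the straightforward opponent: bids of rounds < length pre are
  taken from pre, later bids from s. hist r is the history h_r.\<close>
fun hist :: "nat \<Rightarrow> (nat \<Rightarrow> 'a \<Rightarrow> real) \<Rightarrow> real \<Rightarrow> real \<Rightarrow> nat list \<Rightarrow> strategy \<Rightarrow> 'a \<Rightarrow> nat
              \<Rightarrow> (nat \<times> nat) list" where
  "hist N Z pinit dP pre s \<omega> 0 = []"
| "hist N Z pinit dP pre s \<omega> (Suc r) =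
     (let h = hist N Z pinit dP pre s \<omega> r;
          u = (if r < length pre then pre ! r else s r h)
      in h @ [(u, demand N Z (price pinit dP r) \<omega>)])"

definition utility :: "nat \<Rightarrow> (nat \<Rightarrow> 'a \<Rightarrow> real) \<Rightarrow> (nat \<Rightarrow> real) \<Rightarrow> nat \<Rightarrow> real \<Rightarrow> real
                         \<Rightarrow> nat list \<Rightarrow> strategy \<Rightarrow> 'a \<Rightarrow> real" where
  "utility N Z v m pinit dP pre s \<omega> =
     (let H = hist N Z pinit dP pre s \<omega> (Rbar v pinit dP);
          stop = {r. r < Rbar v pinit dP \<and> fst (H ! r) + snd (H ! r) \<le> m}
      in if stop = {} then 0
         else (let \<tau> = Min stop in v (fst (H ! \<tau>)) - real (fst (H ! \<tau>)) * price pinit dP \<tau>))"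

definition expU :: "'a measure \<Rightarrow> nat \<Rightarrow> (nat \<Rightarrow> 'a \<Rightarrow> real) \<Rightarrow> (nat \<Rightarrow> real) \<Rightarrow> nat \<Rightarrow> real \<Rightarrow> real
                     \<Rightarrow> strategy \<Rightarrow> real" where
  "expU M N Z v m pinit dP s = (\<integral>\<omega>. utility N Z v m pinit dP [] s \<omega> \<partial>M)"

definition hist_event :: "'a measure \<Rightarrow> nat \<Rightarrow> (nat \<Rightarrow> 'a \<Rightarrow> real) \<Rightarrow> real \<Rightarrow> real
                          \<Rightarrow> (nat \<times> nat) list \<Rightarrow> 'a set" where
  "hist_event M N Z pinit dP h =
     {\<omega> \<in> space M. \<forall>r < length h. demand N Z (price pinit dP r) \<omega> = snd (h ! r)}"

definition condU :: "'a measure \<Rightarrow> nat \<Rightarrow> (nat \<Rightarrow> 'a \<Rightarrow> real) \<Rightarrow> (nat \<Rightarrow> real) \<Rightarrow> nat \<Rightarrow> real \<Rightarrow> real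
                     \<Rightarrow> strategy \<Rightarrow> (nat \<times> nat) list \<Rightarrow> real" where
  "condU M N Z v m pinit dP s h =
     (\<integral>\<omega>. indicator (hist_event M N Z pinit dP h) \<omega> * utility N Z v m pinit dP (map fst h) s \<omega> \<partial>M)
       / measure M (hist_event M N Z pinit dP h)"

definition admissible :: "'a measure \<Rightarrow> nat \<Rightarrow> (nat \<Rightarrow> 'a \<Rightarrow> real) \<Rightarrow> (nat \<Rightarrow> real) \<Rightarrow> nat \<Rightarrow> real \<Rightarrow> real
                          \<Rightarrow> (nat \<times> nat) list \<Rightarrow> bool" where
  "admissible M N Z v m pinit dP h \<longleftrightarrow>
     (let t = length h in 1 \<le> t
       \<and> fst (h ! 0) \<le> sigma v m pinit dP 0
       \<and> (\<forall>r. 1 \<le> r \<longrightarrow> r < t \<longrightarrow> fst (h ! r) \<le> fst (h ! (r - 1)))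
       \<and> (\<forall>r. r + 2 \<le> t \<longrightarrow> m < fst (h ! r) + snd (h ! r))
       \<and> 0 < measure M (hist_event M N Z pinit dP h))"

definition markov_upto :: "'a measure \<Rightarrow> (nat \<Rightarrow> 'a \<Rightarrow> nat) \<Rightarrow> nat \<Rightarrow> bool" where
  "markov_upto M X T \<longleftrightarrow>
     (\<forall>t. 1 \<le> t \<longrightarrow> t \<le> T \<longrightarrow> (\<forall>ds. length ds = Suc t \<longrightarrow>
        (let A = {\<omega> \<in> space M. \<forall>r<t. X r \<omega> = ds ! r};
             B = {\<omega> \<in> space M. X (t - 1) \<omega> = ds ! (t - 1)} in
         0 < measure M A \<longrightarrow>
         measure M {\<omega> \<in> A. X t \<omega> = ds ! t} / measure M A
           = measure M {\<omega> \<in> B. X t \<omega> = ds ! t} / measure M B)))"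

end

theory Submission
  imports Defs
begin

lemma minargmax_prop:
  fixes f :: "nat \<Rightarrow> real"
  shows "minargmax k f \<le> k \<and> (\<forall>u\<le>k. f u \<le> f (minargmax k f))"
proof -
  have "finite (f ` {..k})" "f ` {..k} \<noteq> {}" by auto
  then have "Max (f ` {..k}) \<in> f ` {..k}" by (rule Max_in)
  then obtain u0 where u0: "u0 \<le> k" "f u0 = Max (f ` {..k})" by (metis atMost_iff imageE)
  have "\<exists>u. u \<le> k \<and> (\<forall>u'\<le>k. f u' \<le> f u)"
    using u0 by (intro exI[of _ u0]) auto
  then show ?thesis unfolding minargmax_def by (rule LeastI_ex)
qed

lemma minargmax_Max:
  fixes f :: "nat \<Rightarrow> real"
  shows "f (minargmax k f) = Max (f ` {..k})"
  using minargmax_prop[of k f]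
  by (intro antisym Max_ge Max.boundedI) auto

lemma length_hist[simp]: "length (hist N Z pinit dP pre s \<omega> r) = r"
  by (induction r) (auto simp: Let_def)

lemma hist_nth: "j < r \<Longrightarrow> hist N Z pinit dP pre s \<omega> r ! j = hist N Z pinit dP pre s \<omega> (Suc j) ! j"
proof (induction r)
  case 0 then show ?case by simp
next
  case (Suc r)
  show ?case
  proof (cases "j < r")
    case True
    then show ?thesis using Suc by (simp add: Let_def nth_append)
  next
    case False
    then have "j = r" using Suc by auto
    then show ?thesis by simp
  qed
qed

lemma hist_nth_snd: "j < r \<Longrightarrow> snd (hist N Z pinit dP pre s \<omega> r ! j) = demand N Z (price pinit dP j) \<omega>"
  by (subst hist_nth) (auto simp: Let_def nth_append)

lemma hist_pre:
  assumes "\<forall>r<length h. demand N Z (price pinit dP r) \<omega> = snd (h ! r)"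
  shows "r \<le> length h \<Longrightarrow> hist N Z pinit dP (map fst h) s \<omega> r = take r h"
proof (induction r)
  case 0 then show ?case by simp
next
  case (Suc r)
  then have "r < length h" by simp
  then show ?case using Suc assms by (simp add: Let_def take_Suc_conv_app_nth)
qed

lemma hist_ext:
  assumes "\<forall>r<length h. demand N Z (price pinit dP r) \<omega> = snd (h ! r)"
  shows "hist N Z pinit dP (map fst h) s \<omega> r = hist N Z pinit dP (map fst h @ [s (length h) h]) s \<omega> r"
proof (induction r)
  case 0 then show ?case by simp
next
  case (Suc r)
  show ?case
  proof (cases "r = length h")
    case True
    then have "hist N Z pinit dP (map fst h) s \<omega> r = h"
      using hist_pre[OF assms, of r s] by simp
    then show ?thesis using Suc True by (simp add: Let_def nth_append)
  next
    case False
    then show ?thesis using Suc by (simp add: Let_def nth_append)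
  qed
qed

locale auct =
  fixes m N :: nat and pinit dP :: real and v :: "nat \<Rightarrow> real"
    and M :: "'a measure" and Z :: "nat \<Rightarrow> 'a \<Rightarrow> real"
    and K :: "nat \<Rightarrow> nat \<Rightarrow> nat \<Rightarrow> real"
  assumes P: "prob_space M"
    and Zmeas: "\<forall>j\<in>{1..N}. Z j \<in> borel_measurable M"
    and Rbar1: "1 \<le> \<lceil>(v 1 - pinit) / dP\<rceil>"
    and Kcond: "\<forall>t\<ge>1. \<forall>d\<le>N. \<forall>d'\<le>N.
        0 < measure M {\<omega> \<in> space M. demand N Z (price pinit dP (t - 1)) \<omega> = d} \<longrightarrow>
        K t d d' = measure M {\<omega> \<in> space M. demand N Z (price pinit dP (t - 1)) \<omega> = d
                                         \<and> demand N Z (price pinit dP t) \<omega> = d'}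
                   / measure M {\<omega> \<in> space M. demand N Z (price pinit dP (t - 1)) \<omega> = d}"
    and MP: "markov_upto M (\<lambda>t \<omega>. demand N Z (price pinit dP t) \<omega>) (Rbar v pinit dP)"
begin

abbreviation "X t \<equiv> demand N Z (price pinit dP t)"

lemma demand_le: "demand N Z p \<omega> \<le> N"
proof -
  have "demand N Z p \<omega> \<le> (\<Sum>j\<in>{1..N}. 1)"
    unfolding demand_def by (rule sum_mono) auto
  then show ?thesis by simp
qed

lemma demand_real_meas: "(\<lambda>\<omega>. real (demand N Z p \<omega>)) \<in> borel_measurable M"
proof -
  have "(\<lambda>\<omega>. real (demand N Z p \<omega>)) = (\<lambda>\<omega>. \<Sum>j\<in>{1..N}. indicator {x. p < x} (Z j \<omega>))"
    unfolding demand_def by (intro ext) (simp add: indicator_def)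
  also have "\<dots> \<in> borel_measurable M"
  proof (rule borel_measurable_sum)
    fix j assume "j \<in> {1..N}"
    then have "Z j \<in> borel_measurable M" using Zmeas by auto
    then show "(\<lambda>\<omega>. indicator {x. p < x} (Z j \<omega>) :: real) \<in> borel_measurable M"
      by (rule measurable_compose) (rule borel_measurable_indicator, simp)
  qed
  finally show ?thesis .
qed

lemma demand_meas: "demand N Z p \<in> measurable M (count_space UNIV)"
  unfolding measurable_count_space_eq2_countable
proof (intro conjI ballI)
  fix a :: nat
  have "demand N Z p -` {a} \<inter> space M = {\<omega>\<in>space M. real (demand N Z p \<omega>) = real a}"
    by auto
  also have "\<dots> \<in> sets M"
    using demand_real_meas by measurable
  finally show "demand N Z p -` {a} \<inter> space M \<in> sets M" .
qed auto

lemma hist_meas: "(\<lambda>\<omega>. hist N Z pinit dP pre s \<omega> r) \<in> measurable M (count_space UNIV)"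
proof (induction r)
  case 0
  then show ?case by simp
next
  case (Suc r)
  let ?F = "\<lambda>(h, d). h @ [(if r < length pre then pre ! r else s r h, d)]"
  have eq: "(\<lambda>\<omega>. hist N Z pinit dP pre s \<omega> (Suc r)) = (\<lambda>\<omega>. ?F (hist N Z pinit dP pre s \<omega> r, X r \<omega>))"
    by (simp add: Let_def)
  have "(\<lambda>\<omega>. (hist N Z pinit dP pre s \<omega> r, X r \<omega>)) \<in> measurable M (count_space UNIV \<Otimes>\<^sub>M count_space UNIV)"
    using Suc demand_meas by (intro measurable_Pair) auto
  then have "(\<lambda>\<omega>. (hist N Z pinit dP pre s \<omega> r, X r \<omega>)) \<in> measurable M (count_space UNIV)"
    by (simp add: pair_measure_countable)
  then show ?case unfolding eq
    by (rule measurable_compose) simp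
qed

lemma utility_meas: "utility N Z v m pinit dP pre s \<in> borel_measurable M"
proof -
  define G where "G = (\<lambda>H. let stop = {r. r < Rbar v pinit dP \<and> fst (H ! r) + snd (H ! r) \<le> m}
      in if stop = {} then 0
         else (let \<tau> = Min stop in v (fst (H ! \<tau>)) - real (fst (H ! \<tau>)) * price pinit dP \<tau>))"
  have "utility N Z v m pinit dP pre s = (\<lambda>\<omega>. G (hist N Z pinit dP pre s \<omega> (Rbar v pinit dP)))"
    unfolding utility_def G_def by (simp add: Let_def)
  also have "\<dots> \<in> borel_measurable M"
    using hist_meas by (rule measurable_compose) simp
  finally show ?thesis .
qed

lemma E_meas: "hist_event M N Z pinit dP h \<in> sets M"
proof -
  have [measurable]: "demand N Z p \<in> measurable M (count_space UNIV)" for p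
    by (rule demand_meas)
  show ?thesis unfolding hist_event_def by measurable
qed



abbreviation "R \<equiv> Rbar v pinit dP"
abbreviation "E h \<equiv> hist_event M N Z pinit dP h"
abbreviation "U pre s \<equiv> utility N Z v m pinit dP pre s"
abbreviation "sig0 \<equiv> sigma v m pinit dP 0"

lemma R1: "1 \<le> R"
  using Rbar1 unfolding Rbar_def by linarith

lemma sig0_le: "sig0 \<le> m"
  unfolding sigma_def using minargmax_prop by blast

lemma bids_le:
  assumes s: "valid_strategy v m pinit dP s" and pre: "\<forall>x\<in>set pre. x \<le> m"
  shows "r \<le> R \<Longrightarrow> \<forall>p\<in>set (hist N Z pinit dP pre s \<omega> r). fst p \<le> m"
proof (induction r)
  case 0 then show ?case by simp
next
  case (Suc r)
  let ?h = "hist N Z pinit dP pre s \<omega> r"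
  have "(if r < length pre then pre ! r else s r ?h) \<le> m"
  proof (cases "r < length pre")
    case True then show ?thesis using pre by simp
  next
    case False
    have "s r ?h \<le> (if r = 0 then sig0 else fst (last ?h))"
      using s Suc.prems unfolding valid_strategy_def by auto
    moreover have "r \<noteq> 0 \<Longrightarrow> fst (last ?h) \<le> m"
      using Suc by (metis Suc_leD last_in_set length_0_conv length_hist)
    ultimately show ?thesis using False sig0_le by (auto split: if_splits)
  qed
  then show ?case using Suc by (auto simp: Let_def)
qed

definition "Cb = (\<Sum>u\<le>m. \<Sum>\<tau><R. \<bar>v u - real u * price pinit dP \<tau>\<bar>)"

lemma utility_bound:
  assumes s: "valid_strategy v m pinit dP s" and pre: "\<forall>x\<in>set pre. x \<le> m"
  shows "\<bar>U pre s \<omega>\<bar> \<le> Cb"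
proof -
  let ?H = "hist N Z pinit dP pre s \<omega> R"
  let ?stop = "{r. r < R \<and> fst (?H ! r) + snd (?H ! r) \<le> m}"
  have C0: "0 \<le> Cb" unfolding Cb_def by (intro sum_nonneg) auto
  show ?thesis
  proof (cases "?stop = {}")
    case True then show ?thesis using C0 unfolding utility_def by (simp add: Let_def)
  next
    case False
    define \<tau> where "\<tau> = Min ?stop"
    have fin: "finite ?stop" by auto
    have "\<tau> \<in> ?stop" unfolding \<tau>_def using fin False by (rule Min_in)
    then have t: "\<tau> < R" by simp
    then have "?H ! \<tau> \<in> set ?H" by simp
    then have u: "fst (?H ! \<tau>) \<le> m" using bids_le[OF s pre, of R \<omega>] by auto
    have eq: "U pre s \<omega> = v (fst (?H ! \<tau>)) - real (fst (?H ! \<tau>)) * price pinit dP \<tau>"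
      unfolding utility_def Let_def \<tau>_def by (simp only: if_not_P[OF False])
    have "\<bar>U pre s \<omega>\<bar> \<le> (\<Sum>\<tau>'<R. \<bar>v (fst (?H ! \<tau>)) - real (fst (?H ! \<tau>)) * price pinit dP \<tau>'\<bar>)"
      unfolding eq using t by (intro member_le_sum) simp_all
    also have "\<dots> \<le> Cb" unfolding Cb_def
      using u by (intro member_le_sum[where f="\<lambda>u. \<Sum>\<tau>'<R. \<bar>v u - real u * price pinit dP \<tau>'\<bar>"]) (simp_all add: sum_nonneg)
    finally show ?thesis .
  qed
qed

definition "I s h = (\<integral>\<omega>. indicator (E h) \<omega> * U (map fst h) s \<omega> \<partial>M)"

lemma integrable_I:
  assumes s: "valid_strategy v m pinit dP s" and pre: "\<forall>x\<in>set (map fst h). x \<le> m"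
  shows "integrable M (\<lambda>\<omega>. indicator (E h) \<omega> * U (map fst h) s \<omega>)"
proof -
  interpret prob_space M by (rule P)
  show ?thesis
  proof (rule integrable_const_bound[where B=Cb])
    show "AE x in M. norm (indicator (E h) x * U (map fst h) s x) \<le> Cb"
    proof (intro AE_I2)
      fix x
      have "\<bar>U (map fst h) s x\<bar> \<le> Cb" by (rule utility_bound[OF s pre])
      moreover have "0 \<le> Cb" unfolding Cb_def by (intro sum_nonneg) auto
      ultimately show "norm (indicator (E h) x * U (map fst h) s x) \<le> Cb"
        by (cases "x \<in> E h") auto
    qed
    show "(\<lambda>\<omega>. indicator (E h) \<omega> * U (map fst h) s \<omega>) \<in> borel_measurable M"
      using E_meas utility_meas by (intro borel_measurable_times borel_measurable_indicator)
  qed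
qed




lemma E_snoc: "E (h @ [(u, d')]) = {\<omega> \<in> E h. X (length h) \<omega> = d'}"
  unfolding hist_event_def by (auto simp: nth_append less_Suc_eq)

lemma E_sub: "E (h @ [(u, d')]) \<subseteq> E h"
  unfolding E_snoc by auto

lemma U_ext:
  assumes "\<omega> \<in> E h"
  shows "U (map fst h) s \<omega> = U (map fst h @ [s (length h) h]) s \<omega>"
proof -
  have a: "\<forall>r<length h. demand N Z (price pinit dP r) \<omega> = snd (h ! r)"
    using assms unfolding hist_event_def by auto
  show ?thesis unfolding utility_def using hist_ext[OF a, of s] by simp
qed

lemma decomp:
  assumes s: "valid_strategy v m pinit dP s" and pre: "\<forall>x\<in>set (map fst h). x \<le> m"
    and t: "length h < R"
  shows "I s h = (\<Sum>d'\<le>N. I s (h @ [(s (length h) h, d')]))"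
proof -
  define u where "u = s (length h) h"
  have um: "u \<le> m"
  proof -
    have "u \<le> (if length h = 0 then sig0 else fst (last h))"
      using s t unfolding valid_strategy_def u_def by auto
    moreover have "length h \<noteq> 0 \<Longrightarrow> fst (last h) \<le> m"
      using pre by (metis last_in_set length_0_conv list.set_map imageI)
    ultimately show ?thesis using sig0_le by (auto split: if_splits)
  qed
  have pw: "indicator (E h) \<omega> * U (map fst h) s \<omega>
      = (\<Sum>d'\<le>N. indicator (E (h @ [(u, d')])) \<omega> * U (map fst (h @ [(u, d')])) s \<omega>)"
    if "\<omega> \<in> space M" for \<omega>
  proof (cases "\<omega> \<in> E h")
    case True
    have ind: "indicator (E (h @ [(u, d')])) \<omega> = (if d' = X (length h) \<omega> then 1 else (0::real))" for d'
      using True unfolding E_snoc by (auto simp: indicator_def)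
    have "(\<Sum>d'\<le>N. indicator (E (h @ [(u, d')])) \<omega> * U (map fst (h @ [(u, d')])) s \<omega>)
        = (\<Sum>d'\<le>N. if d' = X (length h) \<omega> then U (map fst h @ [u]) s \<omega> else 0)"
      by (intro sum.cong) (auto simp: ind)
    also have "\<dots> = U (map fst h @ [u]) s \<omega>"
      using demand_le by (subst sum.delta) auto
    also have "\<dots> = U (map fst h) s \<omega>"
      unfolding u_def using U_ext[OF True] by simp
    finally show ?thesis using True by simp
  next
    case False
    then have "\<omega> \<notin> E (h @ [(u, d')])" for d' using E_sub by blast
    then show ?thesis using False by simp
  qed
  have "I s h = (\<integral>\<omega>. (\<Sum>d'\<le>N. indicator (E (h @ [(u, d')])) \<omega> * U (map fst (h @ [(u, d')])) s \<omega>) \<partial>M)"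
    unfolding I_def using pw by (intro Bochner_Integration.integral_cong) auto
  also have "\<dots> = (\<Sum>d'\<le>N. I s (h @ [(u, d')]))"
    unfolding I_def
    by (intro Bochner_Integration.integral_sum integrable_I[OF s]) (use pre um in auto)
  finally show ?thesis unfolding u_def .
qed

lemma I_null:
  assumes "measure M (E h) = 0"
  shows "I s h = 0"
proof -
  interpret prob_space M by (rule P)
  have "E h \<in> null_sets M" using assms E_meas by (simp add: null_sets_def emeasure_eq_measure)
  then have "AE \<omega> in M. \<omega> \<notin> E h" by (rule AE_not_in)
  then have "AE \<omega> in M. indicator (E h) \<omega> * U (map fst h) s \<omega> = 0"
    by eventually_elim simp
  then show ?thesis unfolding I_def by (rule integral_eq_zero_AE)
qed

lemma I_const:
  assumes "\<And>\<omega>. \<omega> \<in> E h \<Longrightarrow> U (map fst h) s \<omega> = c"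
  shows "I s h = measure M (E h) * c"
proof -
  interpret prob_space M by (rule P)
  have "I s h = (\<integral>\<omega>. indicator (E h) \<omega> * c \<partial>M)"
    unfolding I_def by (intro Bochner_Integration.integral_cong) (auto simp: indicator_def assms)
  also have "\<dots> = measure M (E h) * c"
    using E_meas by simp
  finally show ?thesis .
qed

lemma E_p0: "measure M (E [(u, d')]) = p0 M N Z pinit dP d'"
  unfolding p0_def hist_event_def by simp

lemma E_K:
  assumes t1: "1 \<le> length h" and tR: "length h < R" and pos: "0 < measure M (E h)"
    and d': "d' \<le> N"
  shows "measure M (E (h @ [(u, d')])) = measure M (E h) * K (length h) (snd (last h)) d'"
proof -
  define t where "t = length h"
  define d where "d = snd (last h)"
  define ds where "ds = map snd h @ [d']"
  have lds: "length ds = Suc t" unfolding ds_def t_def by simp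
  have ldt: "ds ! (t - 1) = d" unfolding ds_def d_def t_def using t1
    by (cases h rule: rev_cases) (auto simp: nth_append)
  have dst: "ds ! t = d'" unfolding ds_def t_def by (simp add: nth_append)
  let ?A = "{\<omega> \<in> space M. \<forall>r<t. X r \<omega> = ds ! r}"
  let ?B = "{\<omega> \<in> space M. X (t - 1) \<omega> = ds ! (t - 1)}"
  have A: "?A = E h" unfolding hist_event_def ds_def t_def by (auto simp: nth_append)
  have A': "{\<omega> \<in> ?A. X t \<omega> = ds ! t} = E (h @ [(u, d')])"
  proof -
    have "{\<omega> \<in> ?A. X t \<omega> = ds ! t} = {\<omega> \<in> E h. X t \<omega> = ds ! t}" by (simp only: A)
    then show ?thesis using dst unfolding E_snoc t_def by simp
  qed
  have mk: "markov_upto M (\<lambda>t \<omega>. demand N Z (price pinit dP t) \<omega>) R" by (rule MP)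
  have M1: "measure M {\<omega> \<in> ?A. X t \<omega> = ds ! t} / measure M ?A
      = measure M {\<omega> \<in> ?B. X t \<omega> = ds ! t} / measure M ?B"
  proof -
    have "0 < measure M ?A" using pos A by simp
    moreover have "0 < measure M ?A \<longrightarrow> measure M {\<omega> \<in> ?A. X t \<omega> = ds ! t} / measure M ?A
      = measure M {\<omega> \<in> ?B. X t \<omega> = ds ! t} / measure M ?B"
      using mk[unfolded markov_upto_def Let_def, rule_format, of t ds] t1 tR lds unfolding t_def by simp
    ultimately show ?thesis by (rule mp[rotated])
  qed
  have B'set: "{\<omega> \<in> ?B. X t \<omega> = ds ! t} = {\<omega> \<in> space M. X (t - 1) \<omega> = d \<and> X t \<omega> = d'}"
    using ldt dst by auto
  have Bset: "?B = {\<omega> \<in> space M. X (t - 1) \<omega> = d}"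
    using ldt by simp
  have eq1: "measure M (E (h @ [(u, d')])) / measure M (E h)
      = measure M {\<omega> \<in> space M. X (t - 1) \<omega> = d \<and> X t \<omega> = d'} / measure M {\<omega> \<in> space M. X (t - 1) \<omega> = d}"
    using M1 unfolding A' B'set unfolding A Bset .
  have sub: "E h \<subseteq> {\<omega> \<in> space M. X (t - 1) \<omega> = d}"
  proof -
    have "h \<noteq> []" using t1 by auto
    then show ?thesis unfolding hist_event_def d_def t_def by (auto simp: last_conv_nth)
  qed
  have posB: "0 < measure M {\<omega> \<in> space M. X (t - 1) \<omega> = d}"
  proof -
    interpret prob_space M by (rule P)
    have "{\<omega> \<in> space M. X (t - 1) \<omega> = d} \<in> sets M"
      using demand_meas[of "price pinit dP (t - 1)"] unfolding measurable_count_space_eq2_countable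
      by (simp add: vimage_def Int_def conj_commute)
    then have "measure M (E h) \<le> measure M {\<omega> \<in> space M. X (t - 1) \<omega> = d}"
      using sub by (intro finite_measure_mono) auto
    then show ?thesis using pos by simp
  qed
  have dN: "d \<le> N"
  proof -
    have "E h \<noteq> {}" using pos by auto
    then obtain \<omega> where "\<omega> \<in> E h" by auto
    then have "X (t - 1) \<omega> = d" using sub by auto
    then show ?thesis using demand_le by metis
  qed
  have "K t d d' = measure M {\<omega> \<in> space M. X (t - 1) \<omega> = d \<and> X t \<omega> = d'} / measure M {\<omega> \<in> space M. X (t - 1) \<omega> = d}"
    using Kcond t1 dN d' posB unfolding t_def by auto
  then have "measure M (E (h @ [(u, d')])) / measure M (E h) = K t d d'" using eq1 by simp
  then show ?thesis using pos unfolding t_def d_def by (simp add: field_simps)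
qed


definition "SA h \<longleftrightarrow> 1 \<le> length h \<and> length h \<le> R \<and> (\<forall>x\<in>set (map fst h). x \<le> m)
   \<and> (\<forall>r. r + 2 \<le> length h \<longrightarrow> m < fst (h ! r) + snd (h ! r))"

lemma H_nth:
  assumes "\<omega> \<in> E h" "length h \<le> R" "r < length h"
  shows "hist N Z pinit dP (map fst h) s \<omega> R ! r = h ! r"
proof -
  have a: "\<forall>r<length h. demand N Z (price pinit dP r) \<omega> = snd (h ! r)"
    using assms unfolding hist_event_def by auto
  have "hist N Z pinit dP (map fst h) s \<omega> R ! r = hist N Z pinit dP (map fst h) s \<omega> (Suc r) ! r"
    using assms by (intro hist_nth) auto
  also have "\<dots> = hist N Z pinit dP (map fst h) s \<omega> (length h) ! r"
    using assms by (intro hist_nth[symmetric]) auto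
  also have "\<dots> = h ! r" using hist_pre[OF a, of "length h" s] by simp
  finally show ?thesis .
qed

lemma U_stop:
  assumes sa: "SA h" and om: "\<omega> \<in> E h" and st: "fst (last h) + snd (last h) \<le> m"
  shows "U (map fst h) s \<omega> = v (fst (last h)) - real (fst (last h)) * price pinit dP (length h - 1)"
proof -
  define t where "t = length h"
  let ?H = "hist N Z pinit dP (map fst h) s \<omega> R"
  let ?stop = "{r. r < R \<and> fst (?H ! r) + snd (?H ! r) \<le> m}"
  have t1: "1 \<le> t" "t \<le> R" using sa unfolding SA_def t_def by auto
  have hne: "h \<noteq> []" using t1 unfolding t_def by auto
  have Hl: "?H ! (t - 1) = last h"
    using H_nth[OF om, of "t - 1" s] t1 hne unfolding t_def by (simp add: last_conv_nth)
  have mem: "t - 1 \<in> ?stop" using Hl st t1 by simp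
  have low: "\<forall>y\<in>?stop. t - 1 \<le> y"
  proof
    fix y assume y: "y \<in> ?stop"
    show "t - 1 \<le> y"
    proof (rule ccontr)
      assume "\<not> t - 1 \<le> y"
      then have "y + 2 \<le> t" "y < t" by auto
      then have "m < fst (h ! y) + snd (h ! y)" using sa unfolding SA_def t_def by auto
      moreover have "?H ! y = h ! y" using H_nth[OF om, of y s] \<open>y < t\<close> t1 unfolding t_def by simp
      ultimately show False using y by simp
    qed
  qed
  have Min: "Min ?stop = t - 1"
    by (rule Min_eqI) (use mem low in auto)
  have ne: "?stop \<noteq> {}" using mem by blast
  show ?thesis
    unfolding utility_def Let_def
    by (simp only: if_not_P[OF ne] Min Hl) (simp add: t_def)
qed

lemma U_end:
  assumes sa: "SA h" and om: "\<omega> \<in> E h" and tR: "length h = R" and st: "m < fst (last h) + snd (last h)"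
  shows "U (map fst h) s \<omega> = 0"
proof -
  define t where "t = length h"
  let ?H = "hist N Z pinit dP (map fst h) s \<omega> R"
  let ?stop = "{r. r < R \<and> fst (?H ! r) + snd (?H ! r) \<le> m}"
  have t1: "1 \<le> t" "t \<le> R" using sa unfolding SA_def t_def by auto
  have hne: "h \<noteq> []" using t1 unfolding t_def by auto
  have e: "?stop = {}"
  proof (rule ccontr)
    assume "?stop \<noteq> {}"
    then obtain y where y: "y \<in> ?stop" by blast
    then have yt: "y < t" using tR unfolding t_def by simp
    have Hy: "?H ! y = h ! y" using H_nth[OF om, of y s] yt t1 unfolding t_def by simp
    show False
    proof (cases "y = t - 1")
      case True
      then have "h ! y = last h" using hne unfolding t_def by (simp add: last_conv_nth)
      then show False using y Hy st by simp
    next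
      case False
      then have "y + 2 \<le> t" using yt by auto
      then have "m < fst (h ! y) + snd (h ! y)" using sa unfolding SA_def t_def by auto
      then show False using y Hy by simp
    qed
  qed
  show ?thesis unfolding utility_def Let_def e by simp
qed

lemma phi_stop: "k + d \<le> m \<Longrightarrow> phi v m N pinit dP K t k d = v k - real k * price pinit dP (t - 1)"
  unfolding phi_def by (cases "R - t") simp_all

lemma phi_end: "m < k + d \<Longrightarrow> phi v m N pinit dP K R k d = 0"
  unfolding phi_def by simp

lemma phi_step:
  assumes "t < R" "m < k + d"
  shows "phi v m N pinit dP K t k d
     = Max ((\<lambda>u. \<Sum>d'\<le>N. K t d d' * phi v m N pinit dP K (Suc t) u d') ` {..k})"
proof -
  have "R - t = Suc (R - Suc t)" using assms by simp
  then show ?thesis using assms unfolding phi_def by simp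
qed

abbreviation "bel \<equiv> bellman M Z v m N pinit dP K"

lemma bel_valid: "valid_strategy v m pinit dP bel"
  unfolding valid_strategy_def
proof (intro allI impI)
  fix t and h :: "(nat \<times> nat) list" assume "t < R" "length h = t"
  show "bel t h \<le> (if t = 0 then sig0 else fst (last h))"
  proof (cases "h = []")
    case True
    then show ?thesis using \<open>length h = t\<close> minargmax_prop
      unfolding bellman_def beta0_def by auto
  next
    case False
    then show ?thesis using \<open>length h = t\<close> minargmax_prop
      unfolding bellman_def betaT_def by auto
  qed
qed


lemma main_ind:
  assumes s: "valid_strategy v m pinit dP s"
  shows "SA h \<Longrightarrow> I s h \<le> measure M (E h) * phi v m N pinit dP K (length h) (fst (last h)) (snd (last h))
     \<and> (s = bel \<longrightarrow> I s h = measure M (E h) * phi v m N pinit dP K (length h) (fst (last h)) (snd (last h)))"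
proof (induction "R - length h" arbitrary: h rule: less_induct)
  case less
  define t where "t = length h"
  define k where "k = fst (last h)"
  define d where "d = snd (last h)"
  let ?Ph = "measure M (E h)"
  have sa: "SA h" by (rule less.prems)
  have t1: "1 \<le> t" "t \<le> R" using sa unfolding SA_def t_def by auto
  have hne: "h \<noteq> []" using t1 unfolding t_def by auto
  show ?case
  proof (cases "?Ph = 0")
    case True then show ?thesis using I_null[OF True] by simp
  next
    case False
    then have pos: "0 < ?Ph" using measure_nonneg[of M "E h"] by linarith
    show ?thesis
    proof (cases "k + d \<le> m")
      case True
      have "I s h = ?Ph * (v k - real k * price pinit dP (t - 1))"
        by (rule I_const) (use U_stop[OF sa] True in \<open>simp add: k_def d_def t_def\<close>)
      moreover have "phi v m N pinit dP K t k d = v k - real k * price pinit dP (t - 1)"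
        using True by (rule phi_stop)
      ultimately have e: "I s h = ?Ph * phi v m N pinit dP K (length h) (fst (last h)) (snd (last h))"
        unfolding t_def k_def d_def by simp
      show ?thesis using e by (simp only: order_refl simp_thms)
    next
      case nstop: False
      show ?thesis
      proof (cases "t = R")
        case True
        have "I s h = ?Ph * 0"
          by (rule I_const) (use U_end[OF sa] True nstop in \<open>simp add: k_def d_def t_def\<close>)
        moreover have "phi v m N pinit dP K R k d = 0"
          using nstop by (intro phi_end) simp
        ultimately have e: "I s h = ?Ph * phi v m N pinit dP K (length h) (fst (last h)) (snd (last h))"
          using True unfolding t_def k_def d_def by simp
        show ?thesis using e by (simp only: order_refl simp_thms)
      next
        case False
        then have tR: "t < R" using t1 by simp
        define u where "u = s t h"
        define F where "F = (\<lambda>u. \<Sum>d'\<le>N. K t d d' * phi v m N pinit dP K (Suc t) u d')"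
        have uk: "u \<le> k"
        proof -
          have "s t h \<le> (if t = 0 then sig0 else fst (last h))"
            using s tR unfolding valid_strategy_def t_def by blast
          then show ?thesis using t1 unfolding u_def k_def by simp
        qed
        have km: "k \<le> m" using sa hne unfolding SA_def k_def by auto
        have SA': "SA (h @ [(u, d')])" for d'
        proof -
          have "\<forall>r. r + 2 \<le> Suc t \<longrightarrow> m < fst ((h @ [(u, d')]) ! r) + snd ((h @ [(u, d')]) ! r)"
          proof (intro allI impI)
            fix r assume r: "r + 2 \<le> Suc t"
            show "m < fst ((h @ [(u, d')]) ! r) + snd ((h @ [(u, d')]) ! r)"
            proof (cases "r = t - 1")
              case True
              then have "(h @ [(u, d')]) ! r = last h"
                using hne t1 unfolding t_def by (simp add: nth_append last_conv_nth)
              then show ?thesis using nstop unfolding k_def d_def by simp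
            next
              case False
              then have "r + 2 \<le> t" using r by simp
              then show ?thesis using sa unfolding SA_def t_def by (simp add: nth_append)
            qed
          qed
          then show ?thesis using sa tR uk km unfolding SA_def t_def by auto
        qed
        have IH: "I s (h @ [(u, d')]) \<le> measure M (E (h @ [(u, d')])) * phi v m N pinit dP K (Suc t) u d'
             \<and> (s = bel \<longrightarrow> I s (h @ [(u, d')]) = measure M (E (h @ [(u, d')])) * phi v m N pinit dP K (Suc t) u d')" for d'
          using less.hyps[of "h @ [(u, d')]"] SA'[of d'] tR unfolding t_def by simp
        have Pk: "measure M (E (h @ [(u, d')])) = ?Ph * K t d d'" if "d' \<le> N" for d'
          using E_K[OF _ _ pos that, of u] t1 tR unfolding t_def d_def by simp
        have dec: "I s h = (\<Sum>d'\<le>N. I s (h @ [(u, d')]))"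
          using decomp[OF s, of h] sa tR unfolding SA_def u_def t_def by simp
        have le1: "I s h \<le> ?Ph * F u"
        proof -
          have "I s h \<le> (\<Sum>d'\<le>N. measure M (E (h @ [(u, d')])) * phi v m N pinit dP K (Suc t) u d')"
            unfolding dec using IH by (intro sum_mono) blast
          also have "\<dots> = (\<Sum>d'\<le>N. ?Ph * (K t d d' * phi v m N pinit dP K (Suc t) u d'))"
            by (intro sum.cong) (auto simp: Pk)
          also have "\<dots> = ?Ph * F u" unfolding F_def by (simp add: sum_distrib_left)
          finally show ?thesis .
        qed
        have ph: "phi v m N pinit dP K t k d = Max (F ` {..k})"
          unfolding F_def using tR nstop by (intro phi_step) simp_all
        have Fu: "F u \<le> phi v m N pinit dP K t k d"
          unfolding ph using uk by (intro Max_ge) auto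
        have eqb: "I s h = ?Ph * phi v m N pinit dP K t k d" if sb: "s = bel"
        proof -
          have "I s h = (\<Sum>d'\<le>N. measure M (E (h @ [(u, d')])) * phi v m N pinit dP K (Suc t) u d')"
            unfolding dec using IH sb by (intro sum.cong) auto
          also have "\<dots> = (\<Sum>d'\<le>N. ?Ph * (K t d d' * phi v m N pinit dP K (Suc t) u d'))"
            by (intro sum.cong) (auto simp: Pk)
          also have "\<dots> = ?Ph * F u" unfolding F_def by (simp add: sum_distrib_left)
          also have "F u = Max (F ` {..k})"
          proof -
            have "u = minargmax k F"
              unfolding u_def sb bellman_def betaT_def F_def k_def d_def using hne by simp
            then show ?thesis using minargmax_Max by simp
          qed
          finally show ?thesis unfolding ph .
        qed
        have "I s h \<le> ?Ph * phi v m N pinit dP K t k d"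
          using le1 Fu pos by (meson mult_left_mono less_imp_le order_trans)
        then show ?thesis using eqb unfolding t_def k_def d_def by blast
      qed
    qed
  qed
qed


lemma top:
  assumes s: "valid_strategy v m pinit dP s"
  shows "expU M N Z v m pinit dP s \<le> phi0 M Z v m N pinit dP K sig0
    \<and> (s = bel \<longrightarrow> expU M N Z v m pinit dP s = phi0 M Z v m N pinit dP K sig0)"
proof -
  define u where "u = s 0 []"
  define G where "G = (\<lambda>u. \<Sum>d'\<le>N. p0 M N Z pinit dP d' * phi v m N pinit dP K 1 u d')"
  have us: "u \<le> sig0"
  proof -
    have "0 < R" using R1 by simp
    have vs: "\<forall>t<R. \<forall>h. length h = t \<longrightarrow> s t h \<le> (if t = 0 then sig0 else fst (last h))"
      using s unfolding valid_strategy_def .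
    have "s 0 [] \<le> (if (0::nat) = 0 then sig0 else fst (last []))"
      using vs[rule_format, of 0 "[]"] \<open>0 < R\<close> by simp
    then show ?thesis unfolding u_def by simp
  qed
  have um: "u \<le> m" using us sig0_le by simp
  have E0: "E [] = space M" unfolding hist_event_def by simp
  have e1: "expU M N Z v m pinit dP s = I s []"
    unfolding expU_def I_def E0 by (intro Bochner_Integration.integral_cong) auto
  have dec: "I s [] = (\<Sum>d'\<le>N. I s [(u, d')])"
    using decomp[OF s, of "[]"] R1 unfolding u_def by simp
  have SA1: "SA [(u, d')]" for d' unfolding SA_def using R1 um by auto
  have IH: "I s [(u, d')] \<le> p0 M N Z pinit dP d' * phi v m N pinit dP K 1 u d'
     \<and> (s = bel \<longrightarrow> I s [(u, d')] = p0 M N Z pinit dP d' * phi v m N pinit dP K 1 u d')" for d'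
    using main_ind[OF s SA1[of d']] unfolding E_p0 by simp
  have ph0: "phi0 M Z v m N pinit dP K sig0 = Max (G ` {..sig0})"
    unfolding phi0_def G_def ..
  have le: "expU M N Z v m pinit dP s \<le> G u"
    unfolding e1 dec G_def using IH by (intro sum_mono) blast
  have Gu: "G u \<le> phi0 M Z v m N pinit dP K sig0"
    unfolding ph0 using us by (intro Max_ge) auto
  have eqb: "expU M N Z v m pinit dP s = phi0 M Z v m N pinit dP K sig0" if sb: "s = bel"
  proof -
    have "expU M N Z v m pinit dP s = G u"
      unfolding e1 dec G_def using IH sb by (intro sum.cong) auto
    also have "u = minargmax sig0 G"
      unfolding u_def sb bellman_def beta0_def G_def by simp
    finally show ?thesis unfolding ph0 using minargmax_Max by simp
  qed
  show ?thesis using le Gu eqb by auto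
qed

lemma adm_SA:
  assumes "admissible M N Z v m pinit dP h" "length h \<le> R"
  shows "SA h"
proof -
  have a: "1 \<le> length h" "fst (h ! 0) \<le> sig0"
    "\<forall>r. 1 \<le> r \<longrightarrow> r < length h \<longrightarrow> fst (h ! r) \<le> fst (h ! (r - 1))"
    "\<forall>r. r + 2 \<le> length h \<longrightarrow> m < fst (h ! r) + snd (h ! r)"
    using assms(1) unfolding admissible_def Let_def by auto
  have b: "r < length h \<Longrightarrow> fst (h ! r) \<le> sig0" for r
  proof (induction r)
    case 0 then show ?case using a by simp
  next
    case (Suc r)
    then have "fst (h ! Suc r) \<le> fst (h ! r)" using a(3)[rule_format, of "Suc r"] by simp
    then show ?case using Suc by simp
  qed
  have "\<forall>x\<in>set (map fst h). x \<le> m"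
  proof
    fix x assume "x \<in> set (map fst h)"
    then obtain r where "r < length h" "x = fst (h ! r)" by (auto simp: in_set_conv_nth)
    then show "x \<le> m" using b sig0_le by fastforce
  qed
  then show ?thesis unfolding SA_def using a assms(2) by auto
qed

lemma cond:
  assumes s: "valid_strategy v m pinit dP s" and adm: "admissible M N Z v m pinit dP h"
    and hR: "length h \<le> R"
  shows "condU M N Z v m pinit dP s h \<le> phi v m N pinit dP K (length h) (fst (last h)) (snd (last h))
    \<and> (s = bel \<longrightarrow> condU M N Z v m pinit dP s h = phi v m N pinit dP K (length h) (fst (last h)) (snd (last h)))"
proof -
  have pos: "0 < measure M (E h)" using adm unfolding admissible_def Let_def by auto
  have c: "condU M N Z v m pinit dP s h = I s h / measure M (E h)"
    unfolding condU_def I_def ..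
  have mi: "I s h \<le> measure M (E h) * phi v m N pinit dP K (length h) (fst (last h)) (snd (last h))
     \<and> (s = bel \<longrightarrow> I s h = measure M (E h) * phi v m N pinit dP K (length h) (fst (last h)) (snd (last h)))"
    by (rule main_ind[OF s adm_SA[OF adm hR]])
  show ?thesis unfolding c using mi pos by (auto simp: divide_le_eq mult.commute)
qed

end

theorem mainTheorem7:
  fixes n m N :: nat and pinit dP :: real and v :: "nat \<Rightarrow> real"
    and M :: "'a measure" and Z :: "nat \<Rightarrow> 'a \<Rightarrow> real"
    and K :: "nat \<Rightarrow> nat \<Rightarrow> nat \<Rightarrow> real"
  assumes n2: "2 \<le> n" and m1: "1 \<le> m" and N_def: "N = (n - 1) * m"
    and pinit: "0 \<le> pinit" and dP: "0 < dP"
    and val: "valuation_ok v m"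
    and Rbar1: "1 \<le> \<lceil>(v 1 - pinit) / dP\<rceil>"
    and P: "prob_space M"
    and Zmeas: "\<forall>j\<in>{1..N}. Z j \<in> borel_measurable M"
    and Zord: "AE \<omega> in M. (\<forall>i j. 1 \<le> i \<longrightarrow> i \<le> j \<longrightarrow> j \<le> N \<longrightarrow> Z j \<omega> \<le> Z i \<omega>)
                          \<and> (\<forall>j\<in>{1..N}. 0 \<le> Z j \<omega>)"
    and Kprob: "\<forall>t\<ge>1. \<forall>d\<le>N. (\<forall>d'\<le>N. 0 \<le> K t d d' \<and> (d < d' \<longrightarrow> K t d d' = 0))
                               \<and> (\<Sum>d'\<le>d. K t d d') = 1"
    and Kcond: "\<forall>t\<ge>1. \<forall>d\<le>N. \<forall>d'\<le>N.
        0 < measure M {\<omega> \<in> space M. demand N Z (price pinit dP (t - 1)) \<omega> = d} \<longrightarrow>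
        K t d d' = measure M {\<omega> \<in> space M. demand N Z (price pinit dP (t - 1)) \<omega> = d
                                         \<and> demand N Z (price pinit dP t) \<omega> = d'}
                   / measure M {\<omega> \<in> space M. demand N Z (price pinit dP (t - 1)) \<omega> = d}"
    and MP: "markov_upto M (\<lambda>t \<omega>. demand N Z (price pinit dP t) \<omega>) (Rbar v pinit dP)"
  shows "expU M N Z v m pinit dP (bellman M Z v m N pinit dP K)
           = phi0 M Z v m N pinit dP K (sigma v m pinit dP 0)
       \<and> (\<forall>s. valid_strategy v m pinit dP s \<longrightarrow>
            expU M N Z v m pinit dP s \<le> phi0 M Z v m N pinit dP K (sigma v m pinit dP 0))
       \<and> (\<forall>h. length h \<le> Rbar v pinit dP \<longrightarrow> admissible M N Z v m pinit dP h \<longrightarrow>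
            condU M N Z v m pinit dP (bellman M Z v m N pinit dP K) h
              = phi v m N pinit dP K (length h) (fst (last h)) (snd (last h))
          \<and> (\<forall>s. valid_strategy v m pinit dP s \<longrightarrow>
              condU M N Z v m pinit dP s h
                \<le> phi v m N pinit dP K (length h) (fst (last h)) (snd (last h))))"
  proof -
  interpret auct m N pinit dP v M Z K
    by (rule auct.intro) (fact P Zmeas Rbar1 Kcond MP)+
  have A: "expU M N Z v m pinit dP (bellman M Z v m N pinit dP K)
           = phi0 M Z v m N pinit dP K (sigma v m pinit dP 0)"
    using top[OF bel_valid] by simp
  have B: "\<forall>s. valid_strategy v m pinit dP s \<longrightarrow>
            expU M N Z v m pinit dP s \<le> phi0 M Z v m N pinit dP K (sigma v m pinit dP 0)"
    using top by blast
  have C: "\<forall>h. length h \<le> Rbar v pinit dP \<longrightarrow> admissible M N Z v m pinit dP h \<longrightarrow>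
            condU M N Z v m pinit dP (bellman M Z v m N pinit dP K) h
              = phi v m N pinit dP K (length h) (fst (last h)) (snd (last h))
          \<and> (\<forall>s. valid_strategy v m pinit dP s \<longrightarrow>
              condU M N Z v m pinit dP s h
                \<le> phi v m N pinit dP K (length h) (fst (last h)) (snd (last h)))"
  proof (intro allI impI conjI)
    fix h assume hR: "length h \<le> Rbar v pinit dP" and adm: "admissible M N Z v m pinit dP h"
    show "condU M N Z v m pinit dP (bellman M Z v m N pinit dP K) h
              = phi v m N pinit dP K (length h) (fst (last h)) (snd (last h))"
      using cond[OF bel_valid adm hR] by simp
    fix s assume "valid_strategy v m pinit dP s"
    then show "condU M N Z v m pinit dP s h
                \<le> phi v m N pinit dP K (length h) (fst (last h)) (snd (last h))"
      using cond[OF _ adm hR] by blast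
  qed
  show ?thesis using A B C by blast
qed

end
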